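(* For $n\ge1$ let $G_n$ be the number of domino tilings of $C_4\times P_n$. Let $g_n$ be the number of domino tilings of the graph obtained from $C_4\times P_n$ by deleting two adjacent vertices of the end copy $C_4\times\{1\}$, together with their incident edges. Then $$G_n=2G_{n-1}+G_{n-2}+4g_{n-1}\quad(n\ge3),\qquad g_n=G_{n-1}+g_{n-1}\quad(n\ge2).$$ Both sequences satisfy $x_n=3x_{n-1}+3x_{n-2}-x_{n-3}$ for $n\ge4$. For all $n\ge1$, $$g_n=\frac1{12}\Big[(1+\sqrt3)(2+\sqrt3)^n+(1-\sqrt3)(2-\sqrt3)^n\Big]-\frac16(-1)^n .$$
   Context: $H\times K$ denotes the Cartesian product of graphs. $P_n$ is the path with vertex set $\{1,\dots,n\}$ and $C_4$ is the $4$-cycle. For a graph $H$, the subgraph $H\times\{1\}$ of $H\times P_n$ is called its end copy. A domino tiling of a finite graph is a perfect matching, and "number of domino tilings" means the number of perfect matchings. *)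

theory Defs
  imports "HOL-Analysis.Analysis"
begin

type_synonym 'a graph = "'a set \<times> ('a \<Rightarrow> 'a \<Rightarrow> bool)"

definition verts :: "'a graph \<Rightarrow> 'a set" where "verts G = fst G"

definition edges :: "'a graph \<Rightarrow> 'a set set" where
  "edges G = {{u, v} | u v. u \<in> fst G \<and> v \<in> fst G \<and> u \<noteq> v \<and> snd G u v}"

text \<open>Perfect matching = domino tiling.\<close>
definition perfect_matching :: "'a graph \<Rightarrow> 'a set set \<Rightarrow> bool" where
  "perfect_matching G M \<longleftrightarrow> M \<subseteq> edges G \<and> (\<forall>v\<in>verts G. \<exists>!e. e \<in> M \<and> v \<in> e)"

definition num_tilings :: "'a graph \<Rightarrow> nat" where
  "num_tilings G = card {M. perfect_matching G M}"

definition cart_prod :: "'a graph \<Rightarrow> 'b graph \<Rightarrow> ('a \<times> 'b) graph" where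
  "cart_prod G H = (verts G \<times> verts H,
     \<lambda>(a, b) (a', b'). (snd G a a' \<and> b = b') \<or> (a = a' \<and> snd H b b'))"

definition C4 :: "nat graph" where
  "C4 = ({0..<4}, \<lambda>a b. (a + 1) mod 4 = b \<or> (b + 1) mod 4 = a)"

definition path :: "nat \<Rightarrow> nat graph" where
  "path n = ({1..n}, \<lambda>a b. a + 1 = b \<or> b + 1 = a)"

definition delete_verts :: "'a graph \<Rightarrow> 'a set \<Rightarrow> 'a graph" where
  "delete_verts G D = (verts G - D, snd G)"

definition G_seq :: "nat \<Rightarrow> nat" where
  "G_seq n = num_tilings (cart_prod C4 (path n))"

definition g_seq :: "nat \<Rightarrow> nat" where
  "g_seq n = num_tilings (delete_verts (cart_prod C4 (path n)) {(0, 1), (1, 1)})"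

end

theory Submission
  imports Defs
begin


lemma edges_mem: "{a,b} \<in> edges G \<longleftrightarrow> a \<in> verts G \<and> b \<in> verts G \<and> a \<noteq> b \<and> (snd G a b \<or> snd G b a)"
  unfolding edges_def verts_def by (auto simp: doubleton_eq_iff)

lemma edges_sub: "e \<in> edges G \<Longrightarrow> \<exists>a b. e = {a,b} \<and> a \<in> verts G \<and> b \<in> verts G \<and> a \<noteq> b \<and> snd G a b"
  unfolding edges_def verts_def by auto

lemma edge_subset: "e \<in> edges G \<Longrightarrow> e \<subseteq> verts G"
  using edges_sub by fastforce

lemma verts_del[simp]: "verts (delete_verts G D) = verts G - D"
  by (simp add: delete_verts_def verts_def)
lemma snd_del[simp]: "snd (delete_verts G D) = snd G"
  by (simp add: delete_verts_def)
lemma del_del: "delete_verts (delete_verts G D) E = delete_verts G (D \<union> E)"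
  by (auto simp: delete_verts_def verts_def)
lemma del_empty: "delete_verts G {} = G"
  by (simp add: delete_verts_def verts_def)
lemma edges_del: "edges (delete_verts G D) = {e \<in> edges G. e \<inter> D = {}}"
  unfolding edges_def delete_verts_def verts_def by auto

lemma finite_PM: assumes "finite (verts G)" shows "finite {M. perfect_matching G M}"
proof -
  have "edges G \<subseteq> Pow (verts G)" using edge_subset by blast
  then have "finite (edges G)" using assms finite_subset by blast
  moreover have "{M. perfect_matching G M} \<subseteq> Pow (edges G)"
    unfolding perfect_matching_def by blast
  ultimately show ?thesis using finite_subset by blast
qed

lemma pm_unique: "perfect_matching G M \<Longrightarrow> u \<in> verts G \<Longrightarrow> e \<in> M \<Longrightarrow> u \<in> e \<Longrightarrow> e' \<in> M \<Longrightarrow> u \<in> e' \<Longrightarrow> e = e'"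
  unfolding perfect_matching_def by (metis (no_types, lifting))

lemma pm_exists: "perfect_matching G M \<Longrightarrow> u \<in> verts G \<Longrightarrow> \<exists>e\<in>M. u \<in> e"
  unfolding perfect_matching_def by (metis (no_types, lifting))

lemma pm_sub: "perfect_matching G M \<Longrightarrow> M \<subseteq> edges G"
  unfolding perfect_matching_def by simp

lemma pm_intro:
  assumes "M \<subseteq> edges G" "\<And>u. u \<in> verts G \<Longrightarrow> \<exists>e\<in>M. u \<in> e"
    "\<And>u e e'. u \<in> verts G \<Longrightarrow> e \<in> M \<Longrightarrow> e' \<in> M \<Longrightarrow> u \<in> e \<Longrightarrow> u \<in> e' \<Longrightarrow> e = e'"
  shows "perfect_matching G M"
  unfolding perfect_matching_def using assms by (metis (no_types, lifting))

lemma part: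
  assumes e: "{v,w} \<in> edges G"
  shows "bij_betw (\<lambda>M. M - {{v,w}}) {M. perfect_matching G M \<and> {v,w} \<in> M}
           {M. perfect_matching (delete_verts G {v,w}) M}"
proof (rule bij_betw_byWitness[where f' = "\<lambda>M. insert {v,w} M"])
  show "\<forall>M\<in>{M. perfect_matching G M \<and> {v,w} \<in> M}. insert {v,w} (M - {{v,w}}) = M" by (simp add: insert_absorb)
  show "\<forall>M\<in>{M. perfect_matching (delete_verts G {v,w}) M}. insert {v,w} M - {{v,w}} = M"
  proof
    fix M assume "M \<in> {M. perfect_matching (delete_verts G {v,w}) M}"
    then have "M \<subseteq> edges (delete_verts G {v,w})" using pm_sub by blast
    then have "{v,w} \<notin> M" unfolding edges_del by blast
    then show "insert {v,w} M - {{v,w}} = M" by simp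
  qed
  have vV: "v \<in> verts G" "w \<in> verts G" using edges_mem[of v w G] e by blast+
  show "(\<lambda>M. M - {{v,w}}) ` {M. perfect_matching G M \<and> {v,w} \<in> M}
          \<subseteq> {M. perfect_matching (delete_verts G {v,w}) M}"
  proof clarify
    fix M assume pm: "perfect_matching G M" and vw: "{v,w} \<in> M"
    have sub: "M \<subseteq> edges G" using pm pm_sub by blast
    have dis: "e \<inter> {v,w} = {}" if "e \<in> M" "e \<noteq> {v,w}" for e
    proof -
      have "v \<notin> e" using pm_unique[OF pm vV(1) vw _ that(1)] that(2) by blast
      moreover have "w \<notin> e" using pm_unique[OF pm vV(2) vw _ that(1)] that(2) by blast
      ultimately show ?thesis by blast
    qed
    show "perfect_matching (delete_verts G {v,w}) (M - {{v,w}})"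
    proof (rule pm_intro)
      show "M - {{v, w}} \<subseteq> edges (delete_verts G {v, w})" unfolding edges_del using sub dis by blast
      fix u assume u: "u \<in> verts (delete_verts G {v, w})"
      then have u': "u \<in> verts G" "u \<notin> {v,w}" by auto
      obtain e where e1: "e \<in> M" "u \<in> e" using pm_exists[OF pm u'(1)] by blast
      have "e \<noteq> {v,w}" using u' e1 by blast
      then show "\<exists>e\<in>M - {{v, w}}. u \<in> e" using e1 by blast
    next
      fix u e e' assume "u \<in> verts (delete_verts G {v, w})" "e \<in> M - {{v, w}}" "e' \<in> M - {{v, w}}" "u \<in> e" "u \<in> e'"
      then show "e = e'" using pm_unique[OF pm] by auto
    qed
  qed
  show "(\<lambda>M. insert {v,w} M) ` {M. perfect_matching (delete_verts G {v,w}) M}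
          \<subseteq> {M. perfect_matching G M \<and> {v,w} \<in> M}"
  proof clarify
    fix M assume pm: "perfect_matching (delete_verts G {v,w}) M"
    have sub: "M \<subseteq> edges G" and dis: "\<And>e. e \<in> M \<Longrightarrow> e \<inter> {v,w} = {}"
      using pm_sub[OF pm] unfolding edges_del by auto
    have "perfect_matching G (insert {v,w} M)"
    proof (rule pm_intro)
      show "insert {v, w} M \<subseteq> edges G" using sub e by blast
    next
      fix u assume u: "u \<in> verts G"
      show "\<exists>e\<in>insert {v, w} M. u \<in> e"
      proof (cases "u \<in> {v,w}")
        case True then show ?thesis by blast
      next
        case False
        then have "u \<in> verts (delete_verts G {v,w})" using u by simp
        then show ?thesis using pm_exists[OF pm] by blast
      qed
    next
      fix u e e' assume u: "u \<in> verts G" and ee: "e \<in> insert {v, w} M" "e' \<in> insert {v, w} M" "u \<in> e" "u \<in> e'"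
      show "e = e'"
      proof (cases "u \<in> {v,w}")
        case True then show ?thesis using ee dis by blast
      next
        case False
        then have u2: "u \<in> verts (delete_verts G {v,w})" using u by simp
        have "e \<in> M" "e' \<in> M" using ee False by auto
        then show ?thesis using pm_unique[OF pm u2] ee by blast
      qed
    qed
    then show "perfect_matching G (insert {v,w} M) \<and> {v,w} \<in> insert {v,w} M" by simp
  qed
qed

lemma expand:
  assumes fin: "finite (verts G)" and v: "v \<in> verts G"
  shows "num_tilings G = (\<Sum>w\<in>{w. {v,w} \<in> edges G}. num_tilings (delete_verts G {v,w}))"
proof -
  let ?N = "{w. {v,w} \<in> edges G}"
  let ?A = "\<lambda>w. {M. perfect_matching G M \<and> {v,w} \<in> M}"
  have finN: "finite ?N"
    using edges_mem[of v _ G] by (intro finite_subset[OF _ fin]) blast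
  have eq: "{M. perfect_matching G M} = (\<Union>w\<in>?N. ?A w)"
  proof (rule set_eqI, rule iffI)
    fix M assume "M \<in> {M. perfect_matching G M}"
    then have pm: "perfect_matching G M" by simp
    then obtain e where e: "e \<in> M" "v \<in> e" using v unfolding perfect_matching_def by blast
    then have ee: "e \<in> edges G" using pm unfolding perfect_matching_def by blast
    then obtain a b where ab: "e = {a,b}" using edges_sub by blast
    obtain w where "e = {v,w}" using ab e(2) by blast
    then show "M \<in> (\<Union>w\<in>?N. ?A w)" using e ee pm by auto
  qed auto
  have disj: "\<forall>w\<in>?N. \<forall>w'\<in>?N. w \<noteq> w' \<longrightarrow> ?A w \<inter> ?A w' = {}"
  proof (intro ballI impI)
    fix w w' assume w: "w \<in> ?N" and w': "w' \<in> ?N" and ne: "w \<noteq> w'"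
    show "?A w \<inter> ?A w' = {}"
    proof (rule ccontr)
      assume "?A w \<inter> ?A w' \<noteq> {}"
      then obtain M where M: "perfect_matching G M" "{v,w} \<in> M" "{v,w'} \<in> M" by blast
      then have "{v,w} = {v,w'}" using v unfolding perfect_matching_def by blast
      moreover have "v \<noteq> w" using w edges_mem[of v w G] by blast
      ultimately show False using ne by (auto simp: doubleton_eq_iff)
    qed
  qed
  have finA: "\<forall>w\<in>?N. finite (?A w)"
    using finite_PM[OF fin] by (auto intro: finite_subset)
  have cardA: "card (?A w) = num_tilings (delete_verts G {v,w})" if "w \<in> ?N" for w
    unfolding num_tilings_def using part[of v w G] that bij_betw_same_card by blast
  have "num_tilings G = card (\<Union>w\<in>?N. ?A w)" unfolding num_tilings_def using eq by simp
  also have "\<dots> = (\<Sum>w\<in>?N. card (?A w))" by (rule card_UN_disjoint[OF finN finA disj])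
  also have "\<dots> = (\<Sum>w\<in>?N. num_tilings (delete_verts G {v,w}))" using cardA by simp
  finally show ?thesis .
qed


lemma iso_le:
  assumes bij: "bij_betw f (verts G) (verts H)"
    and adj: "\<And>u v. u \<in> verts G \<Longrightarrow> v \<in> verts G \<Longrightarrow> snd H (f u) (f v) = snd G u v"
    and fin: "finite (verts H)"
  shows "num_tilings G \<le> num_tilings H"
proof -
  let ?F = "\<lambda>M. (`) f ` M"
  have injf: "inj_on f (verts G)" using bij bij_betw_imp_inj_on by blast
  have "inj_on ((`) f) (Pow (verts G))" using injf inj_on_image_Pow by blast
  then have inj2: "inj_on ?F (Pow (Pow (verts G)))" using inj_on_image_Pow by blast
  have "{M. perfect_matching G M} \<subseteq> Pow (Pow (verts G))"
    using pm_sub edge_subset by blast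
  then have inj: "inj_on ?F {M. perfect_matching G M}" using inj2 inj_on_subset by blast
  have maps: "?F ` {M. perfect_matching G M} \<subseteq> {M. perfect_matching H M}"
  proof clarify
    fix M assume pm: "perfect_matching G M"
    show "perfect_matching H (?F M)"
    proof (rule pm_intro)
      show "?F M \<subseteq> edges H"
      proof
        fix x assume "x \<in> ?F M"
        then obtain e where e: "e \<in> M" "x = f ` e" by blast
        then have "e \<in> edges G" using pm_sub[OF pm] by blast
        then obtain a b where ab: "e = {a,b}" "a \<in> verts G" "b \<in> verts G" "a \<noteq> b" "snd G a b"
          using edges_sub by metis
        have "f a \<in> verts H" "f b \<in> verts H" using ab bij bij_betw_apply by metis+
        moreover have "f a \<noteq> f b" using ab injf inj_on_def by metis
        moreover have "snd H (f a) (f b)" using ab adj by blast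
        ultimately have "{f a, f b} \<in> edges H" using edges_mem[of "f a" "f b" H] by blast
        then show "x \<in> edges H" using e ab by simp
      qed
    next
      fix x assume x: "x \<in> verts H"
      then obtain u where u: "u \<in> verts G" "x = f u" using bij bij_betw_imp_surj_on by blast
      then obtain e where "e \<in> M" "u \<in> e" using pm_exists[OF pm] by blast
      then show "\<exists>e\<in>?F M. x \<in> e" using u by blast
    next
      fix x e e' assume x: "x \<in> verts H" and ee: "e \<in> ?F M" "e' \<in> ?F M" "x \<in> e" "x \<in> e'"
      obtain d where d: "d \<in> M" "e = f ` d" using ee by blast
      obtain d' where d': "d' \<in> M" "e' = f ` d'" using ee by blast
      obtain a where a: "a \<in> d" "x = f a" using ee d by blast
      obtain a' where a': "a' \<in> d'" "x = f a'" using ee d' by blast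
      have dV: "d \<subseteq> verts G" "d' \<subseteq> verts G" using d d' pm_sub[OF pm] edge_subset by blast+
      have "a = a'" using a a' dV injf inj_on_def by (metis subsetD)
      then have "d = d'" using pm_unique[OF pm] a a' d d' dV by blast
      then show "e = e'" using d d' by simp
    qed
  qed
  have "card {M. perfect_matching G M} \<le> card {M. perfect_matching H M}"
    by (rule card_inj_on_le[OF inj maps finite_PM[OF fin]])
  then show ?thesis unfolding num_tilings_def .
qed

lemma iso_eq:
  assumes bij: "bij_betw f (verts G) (verts H)"
    and adj: "\<And>u v. u \<in> verts G \<Longrightarrow> v \<in> verts G \<Longrightarrow> snd H (f u) (f v) = snd G u v"
    and fin: "finite (verts H)"
  shows "num_tilings G = num_tilings H"
proof (rule antisym)
  show "num_tilings G \<le> num_tilings H" by (rule iso_le[OF bij adj fin])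
  let ?g = "inv_into (verts G) f"
  have bij2: "bij_betw ?g (verts H) (verts G)" using bij bij_betw_inv_into by blast
  have finG: "finite (verts G)" using bij fin bij_betw_finite by blast
  have adj2: "snd G (?g x) (?g y) = snd H x y" if "x \<in> verts H" "y \<in> verts H" for x y
  proof -
    have "?g x \<in> verts G" "?g y \<in> verts G" using that bij2 bij_betw_apply by metis+
    moreover have "f (?g x) = x" "f (?g y) = y"
      using that bij bij_betw_imp_surj_on f_inv_into_f by metis+
    ultimately show ?thesis using adj by metis
  qed
  show "num_tilings H \<le> num_tilings G" by (rule iso_le[OF bij2 adj2 finG])
qed



definition Q :: "nat \<Rightarrow> (nat \<times> nat) graph" where "Q n = cart_prod C4 (path n)"
definition QD :: "nat \<Rightarrow> (nat \<times> nat) set \<Rightarrow> (nat \<times> nat) graph" where "QD n D = delete_verts (Q n) D"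

lemma verts_Q: "verts (Q n) = {0..<4} \<times> {1..n}"
  by (simp add: Q_def cart_prod_def verts_def C4_def path_def)

lemma snd_Q: "snd (Q n) ((a::nat),(i::nat)) (b,j) = ((((a+1) mod 4 = b \<or> (b+1) mod 4 = a) \<and> i = j) \<or> (a = b \<and> (i+1 = j \<or> j+1 = i)))"
  by (simp add: Q_def cart_prod_def C4_def path_def)

lemma lt4: "(a::nat) < 4 \<Longrightarrow> a = 0 \<or> a = 1 \<or> a = 2 \<or> a = 3" by arith

lemma c4adj: assumes "(a::nat) < 4" "b < 4" shows "((a+1) mod 4 = b \<or> (b+1) mod 4 = a) \<longleftrightarrow>
  (a,b) \<in> {(0,1),(1,0),(1,2),(2,1),(2,3),(3,2),(3,0),(0,3)}"
  using lt4[OF assms(1)] lt4[OF assms(2)] by (elim disjE) simp_all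

lemma finite_QD: "finite (verts (QD n D))"
  by (simp add: QD_def verts_Q)



lemma snd_Q': assumes "(a::nat) < 4" "b < 4" shows "snd (Q n) (a,(i::nat)) (b,j) =
   (((a,b) \<in> {(0::nat,1::nat),(1,0),(1,2),(2,1),(2,3),(3,2),(3,0),(0,3)} \<and> i = j) \<or> (a = b \<and> (i+1 = j \<or> j+1 = i)))"
  by (simp only: snd_Q c4adj[OF assms])

lemma adj_neq: "((a,b) \<in> {(0::nat,1::nat),(1,0),(1,2),(2,1),(2,3),(3,2),(3,0),(0,3)} \<and> (i::nat) = j) \<or> (a = b \<and> (i+1 = j \<or> j+1 = i)) \<Longrightarrow> (a,i) \<noteq> (b,j)"
  by auto

lemma conj_drop: "(P \<Longrightarrow> N) \<Longrightarrow> (P \<and> N) = P" by blast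

lemma QD_edge: "{((a::nat),(i::nat)),(b,j)} \<in> edges (QD n D) \<longleftrightarrow> (a,i) \<notin> D \<and> (b,j) \<notin> D \<and> a < 4 \<and> b < 4 \<and>
   1 \<le> i \<and> i \<le> n \<and> 1 \<le> j \<and> j \<le> n \<and>
   (((a,b) \<in> {(0::nat,1::nat),(1,0),(1,2),(2,1),(2,3),(3,2),(3,0),(0,3)} \<and> i = j) \<or> (a = b \<and> (i+1 = j \<or> j+1 = i)))"
  (is "?L \<longleftrightarrow> ?R")
proof -
  have vQ: "x \<in> verts (QD n D) \<longleftrightarrow> x \<notin> D \<and> fst x < 4 \<and> 1 \<le> snd x \<and> snd x \<le> n" for x
    by (cases x) (auto simp: QD_def verts_Q)
  have e: "?L \<longleftrightarrow> (a,i) \<in> verts (QD n D) \<and> (b,j) \<in> verts (QD n D) \<and> (a,i) \<noteq> (b,j) \<and>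
     (snd (Q n) (a,i) (b,j) \<or> snd (Q n) (b,j) (a,i))"
    by (simp only: edges_mem QD_def snd_del)
  have sym: "snd (Q n) (b,j) (a,i) = snd (Q n) (a,i) (b,j)" unfolding snd_Q by blast
  show ?thesis
  proof (cases "a < 4 \<and> b < 4")
    case True
    have "?L \<longleftrightarrow> (a,i) \<notin> D \<and> (b,j) \<notin> D \<and> a < 4 \<and> b < 4 \<and>
   1 \<le> i \<and> i \<le> n \<and> 1 \<le> j \<and> j \<le> n \<and> snd (Q n) (a,i) (b,j) \<and> (a,i) \<noteq> (b,j)"
      unfolding e sym vQ fst_conv snd_conv by blast
    also have "\<dots> \<longleftrightarrow> ?R" unfolding snd_Q'[OF True[THEN conjunct1] True[THEN conjunct2]]
      by (simp only: conj_drop[OF adj_neq[of a b i j]])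
    finally show ?thesis .
  next
    case False
    then show ?thesis unfolding e vQ fst_conv snd_conv by blast
  qed
qed


lemma expandQ:
  assumes "v \<in> verts (Q n)" "v \<notin> D"
  shows "num_tilings (QD n D) = (\<Sum>w\<in>{w. {v,w} \<in> edges (QD n D)}. num_tilings (QD n (D \<union> {v,w})))"
proof -
  have "v \<in> verts (QD n D)" using assms by (simp add: QD_def)
  from expand[OF finite_QD this] show ?thesis by (simp add: QD_def del_del)
qed

lemma stepA: assumes "n \<ge> 2" shows
  "num_tilings (QD n {}) = num_tilings (QD n {(0,1),(1,1)}) + num_tilings (QD n {(0,1),(3,1)}) + num_tilings (QD n {(0,1),(0,2)})"
proof -
  have N: "{w. {(0,1),w} \<in> edges (QD n {})} = {(1,1),(3,1),(0,2)}"
    using assms by (auto simp: QD_edge)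
  have "num_tilings (QD n {}) = (\<Sum>w\<in>{(1,1),(3,1),(0,2)}. num_tilings (QD n ({} \<union> {(0,1),w})))"
    using expandQ[of "(0,1)" n "{}"] N assms by (simp add: verts_Q)
  then show ?thesis by simp
qed


lemma stepB: assumes "n \<ge> 2" shows
  "num_tilings (QD n {(0,1),(0,2)}) = num_tilings (QD n {(1,1),(2,1),(0,1),(0,2)}) + num_tilings (QD n {(1,1),(1,2),(0,1),(0,2)})"
proof -
  have N: "{w. {(1,1),w} \<in> edges (QD n {(0,1),(0,2)})} = {(2,1),(1,2)}"
    using assms by (auto simp: QD_edge)
  have "num_tilings (QD n {(0,1),(0,2)}) = (\<Sum>w\<in>{(2,1),(1,2)}. num_tilings (QD n ({(0,1),(0,2)} \<union> {(1,1),w})))"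
    using expandQ[of "(1,1)" n "{(0,1),(0,2)}"] N assms by (simp add: verts_Q)
  then show ?thesis by simp
qed

lemma stepC: assumes "n \<ge> 2" shows
  "num_tilings (QD n {(0,1),(0,2),(1,1),(2,1)}) = num_tilings (QD n {(3,1),(3,2),(0,1),(0,2),(1,1),(2,1)})"
proof -
  have N: "{w. {(3,1),w} \<in> edges (QD n {(0,1),(0,2),(1,1),(2,1)})} = {(3,2)}"
    using assms by (auto simp: QD_edge)
  have "num_tilings (QD n {(0,1),(0,2),(1,1),(2,1)}) = (\<Sum>w\<in>{(3,2)}. num_tilings (QD n ({(0,1),(0,2),(1,1),(2,1)} \<union> {(3,1),w})))"
    using expandQ[of "(3,1)" n "{(0,1),(0,2),(1,1),(2,1)}"] N assms by (simp add: verts_Q)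
  then show ?thesis by simp
qed

lemma stepD: assumes "n \<ge> 2" shows
  "num_tilings (QD n {(0,1),(0,2),(1,1),(1,2)}) = num_tilings (QD n {(2,1),(3,1),(0,1),(0,2),(1,1),(1,2)}) + num_tilings (QD n {(2,1),(2,2),(0,1),(0,2),(1,1),(1,2)})"
proof -
  have N: "{w. {(2,1),w} \<in> edges (QD n {(0,1),(0,2),(1,1),(1,2)})} = {(3,1),(2,2)}"
    using assms by (auto simp: QD_edge)
  have "num_tilings (QD n {(0,1),(0,2),(1,1),(1,2)}) = (\<Sum>w\<in>{(3,1),(2,2)}. num_tilings (QD n ({(0,1),(0,2),(1,1),(1,2)} \<union> {(2,1),w})))"
    using expandQ[of "(2,1)" n "{(0,1),(0,2),(1,1),(1,2)}"] N assms by (simp add: verts_Q)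
  then show ?thesis by simp
qed

lemma stepE: assumes "n \<ge> 2" shows
  "num_tilings (QD n {(0,1),(0,2),(1,1),(1,2),(2,1),(2,2)}) = num_tilings (QD n {(3,1),(3,2),(0,1),(0,2),(1,1),(1,2),(2,1),(2,2)})"
proof -
  have N: "{w. {(3,1),w} \<in> edges (QD n {(0,1),(0,2),(1,1),(1,2),(2,1),(2,2)})} = {(3,2)}"
    using assms by (auto simp: QD_edge)
  have "num_tilings (QD n {(0,1),(0,2),(1,1),(1,2),(2,1),(2,2)}) = (\<Sum>w\<in>{(3,2)}. num_tilings (QD n ({(0,1),(0,2),(1,1),(1,2),(2,1),(2,2)} \<union> {(3,1),w})))"
    using expandQ[of "(3,1)" n "{(0,1),(0,2),(1,1),(1,2),(2,1),(2,2)}"] N assms by (simp add: verts_Q)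
  then show ?thesis by simp
qed

lemma stepF: assumes "n \<ge> 2" shows
  "num_tilings (QD n {(0,1),(1,1)}) = num_tilings (QD n {(2,1),(3,1),(0,1),(1,1)}) + num_tilings (QD n {(2,1),(2,2),(0,1),(1,1)})"
proof -
  have N: "{w. {(2,1),w} \<in> edges (QD n {(0,1),(1,1)})} = {(3,1),(2,2)}"
    using assms by (auto simp: QD_edge)
  have "num_tilings (QD n {(0,1),(1,1)}) = (\<Sum>w\<in>{(3,1),(2,2)}. num_tilings (QD n ({(0,1),(1,1)} \<union> {(2,1),w})))"
    using expandQ[of "(2,1)" n "{(0,1),(1,1)}"] N assms by (simp add: verts_Q)
  then show ?thesis by simp
qed

lemma stepG: assumes "n \<ge> 2" shows
  "num_tilings (QD n {(0,1),(1,1),(2,1),(2,2)}) = num_tilings (QD n {(3,1),(3,2),(0,1),(1,1),(2,1),(2,2)})"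
proof -
  have N: "{w. {(3,1),w} \<in> edges (QD n {(0,1),(1,1),(2,1),(2,2)})} = {(3,2)}"
    using assms by (auto simp: QD_edge)
  have "num_tilings (QD n {(0,1),(1,1),(2,1),(2,2)}) = (\<Sum>w\<in>{(3,2)}. num_tilings (QD n ({(0,1),(1,1),(2,1),(2,2)} \<union> {(3,1),w})))"
    using expandQ[of "(3,1)" n "{(0,1),(1,1),(2,1),(2,2)}"] N assms by (simp add: verts_Q)
  then show ?thesis by simp
qed

lemma stepA1: shows
  "num_tilings (QD 1 {}) = num_tilings (QD 1 {(0,1),(1,1)}) + num_tilings (QD 1 {(0,1),(3,1)})"
proof -
  have N: "{w. {(0,1),w} \<in> edges (QD 1 {})} = {(1,1),(3,1)}"
    by (auto simp: QD_edge)
  have "num_tilings (QD 1 {}) = (\<Sum>w\<in>{(1,1),(3,1)}. num_tilings (QD 1 ({} \<union> {(0,1),w})))"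
    using expandQ[of "(0,1)" 1 "{}"] N  by (simp add: verts_Q)
  then show ?thesis by simp
qed

lemma stepF1: shows
  "num_tilings (QD 1 {(0,1),(1,1)}) = num_tilings (QD 1 {(2,1),(3,1),(0,1),(1,1)})"
proof -
  have N: "{w. {(2,1),w} \<in> edges (QD 1 {(0,1),(1,1)})} = {(3,1)}"
    by (auto simp: QD_edge)
  have "num_tilings (QD 1 {(0,1),(1,1)}) = (\<Sum>w\<in>{(3,1)}. num_tilings (QD 1 ({(0,1),(1,1)} \<union> {(2,1),w})))"
    using expandQ[of "(2,1)" 1 "{(0,1),(1,1)}"] N  by (simp add: verts_Q)
  then show ?thesis by simp
qed


lemma vQD: "(a,i) \<in> verts (QD n D) \<longleftrightarrow> (a,i) \<notin> D \<and> a < 4 \<and> 1 \<le> i \<and> i \<le> n"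
  by (auto simp: QD_def verts_Q)

lemma shift:
  assumes n: "n \<ge> 2"
  shows "num_tilings (QD n ({0..<4} \<times> {1} \<union> T \<times> {2})) = num_tilings (QD (n-1) (T \<times> {1}))"
proof (rule iso_eq[where f = "\<lambda>(a,i). (a, i - 1)"])
  show "finite (verts (QD (n-1) (T \<times> {1})))" by (rule finite_QD)
  show "bij_betw (\<lambda>(a,i). (a, i - 1)) (verts (QD n ({0..<4} \<times> {1} \<union> T \<times> {2}))) (verts (QD (n-1) (T \<times> {1})))"
  proof (rule bij_betw_byWitness[where f' = "\<lambda>(a,i). (a, i + 1)"])
    show "\<forall>x\<in>verts (QD n ({0..<4} \<times> {1} \<union> T \<times> {2})). (\<lambda>(a,i). (a, i + 1)) ((\<lambda>(a,i). (a, i - 1)) x) = x"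
      by (auto simp: vQD)
    show "\<forall>x\<in>verts (QD (n-1) (T \<times> {1})). (\<lambda>(a,i). (a, i - 1)) ((\<lambda>(a,i). (a, i + 1)) x) = x"
      by (auto simp: vQD)
    show "(\<lambda>(a,i). (a, i - 1)) ` verts (QD n ({0..<4} \<times> {1} \<union> T \<times> {2})) \<subseteq> verts (QD (n-1) (T \<times> {1}))"
    proof clarify
      fix a i assume "(a,i) \<in> verts (QD n ({0..<4} \<times> {1} \<union> T \<times> {2}))"
      then have h: "(a,i) \<notin> {0..<4} \<times> {1} \<union> T \<times> {2}" "a < 4" "1 \<le> i" "i \<le> n" by (auto simp: vQD)
      then have "i \<noteq> 1" by auto
      then show "(a, i - 1) \<in> verts (QD (n-1) (T \<times> {1}))" using h by (auto simp: vQD)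
    qed
    show "(\<lambda>(a,i). (a, i + 1)) ` verts (QD (n-1) (T \<times> {1})) \<subseteq> verts (QD n ({0..<4} \<times> {1} \<union> T \<times> {2}))"
      using n by (auto simp: vQD)
  qed
  fix u v assume u: "u \<in> verts (QD n ({0..<4} \<times> {1} \<union> T \<times> {2}))" and v: "v \<in> verts (QD n ({0..<4} \<times> {1} \<union> T \<times> {2}))"
  obtain a i where ai: "u = (a,i)" by fastforce
  obtain b j where bj: "v = (b,j)" by fastforce
  have "i \<ge> 2" "j \<ge> 2" using u v ai bj by (auto simp: vQD)
  then show "snd (QD (n-1) (T \<times> {1})) ((\<lambda>(a,i). (a, i - 1)) u) ((\<lambda>(a,i). (a, i - 1)) v) =
        snd (QD n ({0..<4} \<times> {1} \<union> T \<times> {2})) u v"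
    unfolding ai bj by (auto simp: QD_def snd_Q)
qed

lemma rot_inv1: assumes "(a::nat) < 4" shows "((a+1) mod 4 + 3) mod 4 = a"
  using lt4[OF assms] by (elim disjE) simp_all
lemma rot_inv2: assumes "(a::nat) < 4" shows "((a+3) mod 4 + 1) mod 4 = a"
  using lt4[OF assms] by (elim disjE) simp_all
lemma rot_adj: assumes "(a::nat) < 4" "b < 4"
  shows "(((a+1) mod 4, (b+1) mod 4) \<in> {(0::nat,1::nat),(1,0),(1,2),(2,1),(2,3),(3,2),(3,0),(0,3)}) =
         ((a,b) \<in> {(0::nat,1::nat),(1,0),(1,2),(2,1),(2,3),(3,2),(3,0),(0,3)})"
  using lt4[OF assms(1)] lt4[OF assms(2)] by (elim disjE) simp_all

definition rot :: "nat \<times> nat \<Rightarrow> nat \<times> nat" where "rot x = ((fst x + 1) mod 4, snd x)"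
definition unrot :: "nat \<times> nat \<Rightarrow> nat \<times> nat" where "unrot x = ((fst x + 3) mod 4, snd x)"

lemma rot_props: "fst (rot x) < 4" "snd (rot x) = snd x" "fst (unrot x) < 4" "snd (unrot x) = snd x"
  by (simp_all add: rot_def unrot_def)

lemma unrot_rot: "fst x < 4 \<Longrightarrow> unrot (rot x) = x"
  unfolding rot_def unrot_def using rot_inv1[of "fst x"] by (simp add: prod_eq_iff)
lemma rot_unrot: "fst x < 4 \<Longrightarrow> rot (unrot x) = x"
  unfolding rot_def unrot_def using rot_inv2[of "fst x"] by (simp add: prod_eq_iff)

lemma vQD': "x \<in> verts (QD n D) \<longleftrightarrow> x \<notin> D \<and> fst x < 4 \<and> 1 \<le> snd x \<and> snd x \<le> n"
  by (cases x) (simp add: vQD)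

lemma rotate:
  assumes D: "D \<subseteq> {0..<4} \<times> UNIV"
  shows "num_tilings (QD n D) = num_tilings (QD n (rot ` D))"
proof (rule iso_eq[where f = rot])
  show "finite (verts (QD n (rot ` D)))" by (rule finite_QD)
  have Dl: "fst d < 4" if "d \<in> D" for d using that D by auto
  show "bij_betw rot (verts (QD n D)) (verts (QD n (rot ` D)))"
  proof (rule bij_betw_byWitness[where f' = unrot])
    show "\<forall>x\<in>verts (QD n D). unrot (rot x) = x" using unrot_rot vQD' by blast
    show "\<forall>x\<in>verts (QD n (rot ` D)). rot (unrot x) = x" using rot_unrot vQD' by blast
    show "rot ` verts (QD n D) \<subseteq> verts (QD n (rot ` D))"
    proof
      fix y assume "y \<in> rot ` verts (QD n D)"
      then obtain x where x: "x \<in> verts (QD n D)" "y = rot x" by blast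
      then have h: "x \<notin> D" "fst x < 4" "1 \<le> snd x" "snd x \<le> n" using vQD' by blast+
      have "rot x \<notin> rot ` D"
      proof
        assume "rot x \<in> rot ` D"
        then obtain d where d: "d \<in> D" "rot x = rot d" by blast
        then have "unrot (rot x) = unrot (rot d)" by simp
        then have "x = d" using unrot_rot[of x] unrot_rot[of d] h(2) Dl[OF d(1)] by simp
        then show False using d h by simp
      qed
      then show "y \<in> verts (QD n (rot ` D))" using h x rot_props[of x] vQD' by simp
    qed
    show "unrot ` verts (QD n (rot ` D)) \<subseteq> verts (QD n D)"
    proof
      fix y assume "y \<in> unrot ` verts (QD n (rot ` D))"
      then obtain x where x: "x \<in> verts (QD n (rot ` D))" "y = unrot x" by blast
      then have h: "x \<notin> rot ` D" "fst x < 4" "1 \<le> snd x" "snd x \<le> n" using vQD' by blast+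
      have "unrot x \<notin> D"
      proof
        assume "unrot x \<in> D"
        then have "rot (unrot x) \<in> rot ` D" by blast
        then show False using rot_unrot[of x] h by simp
      qed
      then show "y \<in> verts (QD n D)" using h x rot_props[of x] vQD' by simp
    qed
  qed
  fix u v assume u: "u \<in> verts (QD n D)" and v: "v \<in> verts (QD n D)"
  obtain a i where ai: "u = (a,i)" by fastforce
  obtain b j where bj: "v = (b,j)" by fastforce
  have ab: "a < 4" "b < 4" using u v ai bj by (auto simp: vQD)
  have m: "(a+1) mod 4 < 4" "(b+1) mod 4 < 4" by simp_all
  have r: "rot (a,i) = ((a+1) mod 4, i)" "rot (b,j) = ((b+1) mod 4, j)" by (simp_all add: rot_def)
  have e1: "((a+1) mod 4 = (b+1) mod 4) = (a = b)"
    using rot_inv1[OF ab(1)] rot_inv1[OF ab(2)] by metis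
  show "snd (QD n (rot ` D)) (rot u) (rot v) = snd (QD n D) u v"
    unfolding ai bj QD_def snd_del r snd_Q'[OF m] snd_Q'[OF ab] rot_adj[OF ab] e1 by (rule refl)
qed

lemma empty_tilings: assumes "verts G = {}" shows "num_tilings G = 1"
proof -
  have "edges G = {}" using edge_subset assms edges_sub by fastforce
  then have "{M. perfect_matching G M} = {{}}" using assms unfolding perfect_matching_def by auto
  then show ?thesis unfolding num_tilings_def by simp
qed

lemma X1: "num_tilings (QD 1 ({0..<4} \<times> {1})) = 1"
  by (rule empty_tilings) (auto simp: QD_def verts_Q)



lemma G_eq: "G_seq n = num_tilings (QD n {})"
  by (simp add: G_seq_def QD_def Q_def del_empty)
lemma g_eq: "g_seq n = num_tilings (QD n {(0,1),(1,1)})"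
  by (simp add: g_seq_def QD_def Q_def)

lemma setc: "x \<in> {0..<4::nat} \<Longrightarrow> x = 0 \<or> x = 1 \<or> x = 2 \<or> x = 3" using lt4 by simp

lemma rot03: "num_tilings (QD n {(0,1),(3,1)}) = num_tilings (QD n {(0,1),(1,1)})"
proof -
  have "num_tilings (QD n {(0,1),(3,1)}) = num_tilings (QD n (rot ` {(0,1),(3,1)}))"
    by (rule rotate) auto
  also have "rot ` {(0,1),(3,1)} = {(0,1),(1,1)}" by (auto simp: rot_def)
  finally show ?thesis .
qed

lemma rot23: "num_tilings (QD n {(2,1),(3,1)}) = num_tilings (QD n {(0,1),(1,1)})"
proof -
  have "num_tilings (QD n {(2,1),(3,1)}) = num_tilings (QD n (rot ` {(2,1),(3,1)}))"
    by (rule rotate) auto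
  also have "rot ` {(2,1),(3,1)} = {(0,1),(3,1)}" by (auto simp: rot_def)
  finally show ?thesis using rot03 by simp
qed

lemma recG: assumes n: "n \<ge> 2"
  shows "G_seq n = 2 * g_seq n + 2 * g_seq (n-1) + num_tilings (QD (n-1) ({0..<4} \<times> {1}))"
proof -
  have s1: "{(3,1),(3,2),(0,1),(0,2),(1,1),(2,1)} = {0..<4} \<times> {1} \<union> {0,3::nat} \<times> {2::nat}"
    by (auto dest: setc)
  have s2: "{(2,1),(3,1),(0,1),(0,2),(1,1),(1,2)} = {0..<4} \<times> {1} \<union> {0,1::nat} \<times> {2::nat}"
    by (auto dest: setc)
  have s3: "{(3,1),(3,2),(0,1),(0,2),(1,1),(1,2),(2,1),(2,2)} = {0..<4} \<times> {1} \<union> {0..<4::nat} \<times> {2::nat}"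
    by (auto dest: setc)
  have t1: "{0,3::nat} \<times> {1::nat} = {(0,1),(3,1)}" by auto
  have t2: "{0,1::nat} \<times> {1::nat} = {(0,1),(1,1)}" by auto
  have a: "num_tilings (QD n {(3,1),(3,2),(0,1),(0,2),(1,1),(2,1)}) = g_seq (n-1)"
    unfolding s1 shift[OF n] t1 rot03 g_eq ..
  have b: "num_tilings (QD n {(2,1),(3,1),(0,1),(0,2),(1,1),(1,2)}) = g_seq (n-1)"
    unfolding s2 shift[OF n] t2 g_eq ..
  have c: "num_tilings (QD n {(3,1),(3,2),(0,1),(0,2),(1,1),(1,2),(2,1),(2,2)}) = num_tilings (QD (n-1) ({0..<4} \<times> {1}))"
    unfolding s3 shift[OF n] ..
  show ?thesis
    using stepA[OF n] stepB[OF n] stepC[OF n] stepD[OF n] stepE[OF n] a b c rot03[of n]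
    unfolding G_eq g_eq by (simp only: insert_commute)
qed

lemma recg: assumes n: "n \<ge> 2"
  shows "g_seq n = G_seq (n-1) + g_seq (n-1)"
proof -
  have s1: "{(2::nat,1::nat),(3,1),(0,1),(1,1)} = {0..<4} \<times> {1} \<union> {} \<times> {2::nat}"
    by (auto dest: setc)
  have s2: "{(3,1),(3,2),(0,1),(1,1),(2,1),(2,2)} = {0..<4} \<times> {1} \<union> {2,3::nat} \<times> {2::nat}"
    by (auto dest: setc)
  have t2: "{2,3::nat} \<times> {1::nat} = {(2,1),(3,1)}" by auto
  have a: "num_tilings (QD n {(2,1),(3,1),(0,1),(1,1)}) = G_seq (n-1)"
    unfolding s1 shift[OF n] G_eq by simp
  have b: "num_tilings (QD n {(3,1),(3,2),(0,1),(1,1),(2,1),(2,2)}) = g_seq (n-1)"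
    unfolding s2 shift[OF n] t2 rot23 g_eq ..
  show ?thesis
    using stepF[OF n] stepG[OF n] a b unfolding g_eq G_eq by (simp only: insert_commute)
qed

lemma Xn: assumes n: "n \<ge> 3" shows "num_tilings (QD (n-1) ({0..<4} \<times> {1})) = G_seq (n-2)"
proof -
  have n1: "n - 1 \<ge> 2" using n by simp
  have "num_tilings (QD (n-1) ({0..<4} \<times> {1})) = num_tilings (QD (n-1) ({0..<4} \<times> {1} \<union> {} \<times> {2}))"
    by simp
  also have "\<dots> = num_tilings (QD (n-1-1) ({} \<times> {1}))" by (rule shift[OF n1])
  also have "n - 1 - 1 = n - 2" by simp
  also have "num_tilings (QD (n-2) ({} \<times> {1})) = G_seq (n-2)" by (simp add: G_eq)
  finally show ?thesis .
qed

lemma base_g1: "g_seq 1 = 1"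
proof -
  have s: "{(2,1),(3,1),(0,1),(1,1)} = {0..<4::nat} \<times> {1::nat}" by (auto dest: setc)
  show ?thesis using stepF1 X1 unfolding g_eq s by simp
qed

lemma base_G1: "G_seq 1 = 2"
  using stepA1 rot03[of 1] base_g1 unfolding G_eq g_eq by simp

lemma G2: "G_seq 2 = 9"
  using recG[of 2] recg[of 2] X1 base_g1 base_G1 by simp



definition F :: "nat \<Rightarrow> real" where
  "F n = ((1 + sqrt 3) * (2 + sqrt 3) ^ n + (1 - sqrt 3) * (2 - sqrt 3) ^ n) / 12 - (-1) ^ n / 6"

lemma s2: "sqrt 3 * sqrt 3 = (3::real)" by simp

lemma pow3: assumes "(x::real)^2 = 4*x - 1" shows "x^(m+3) = 3*x^(m+2) + 3*x^(m+1) - x^m"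
proof -
  have "x^3 = 3*x^2 + 3*x - 1"
  proof -
    have "x^3 = x * x^2" by (simp add: power3_eq_cube power2_eq_square)
    also have "\<dots> = x * (4*x - 1)" using assms by simp
    also have "\<dots> = 4 * x^2 - x" by (simp add: power2_eq_square algebra_simps)
    also have "\<dots> = 3*x^2 + 3*x - 1" using assms by simp
    finally show ?thesis .
  qed
  then have "x^(m+3) = x^m * (3*x^2 + 3*x - 1)" by (simp add: power_add)
  moreover have "x^(m+2) = x^m * x^2" by (rule power_add)
  moreover have "x^(m+1) = x^m * x" by (simp add: mult.commute)
  moreover have "\<And>y z::real. y*(3*z+3*x-1) = 3*(y*z) + 3*(y*x) - y" by (simp add: algebra_simps)
  ultimately show ?thesis by metis
qed

lemma a2: "(2 + sqrt 3)^2 = 4*(2 + sqrt 3) - (1::real)"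
  by (simp add: power2_eq_square algebra_simps)
lemma b2: "(2 - sqrt 3)^2 = 4*(2 - sqrt 3) - (1::real)"
  by (simp add: power2_eq_square algebra_simps)

lemma F_rec: "F (m+3) = 3 * F (m+2) + 3 * F (m+1) - F m"
proof -
  have c: "(-1::real)^(m+3) = 3*(-1)^(m+2) + 3*(-1)^(m+1) - (-1)^m" by (simp add: power_add)
  show ?thesis unfolding F_def pow3[OF a2, of m] pow3[OF b2, of m] c
    by (simp add: field_simps)
qed

lemma F1: "F 1 = 1"
  unfolding F_def by (simp add: algebra_simps)

lemma F2: "F 2 = 3"
proof -
  have A: "(2 + sqrt 3)^2 = 7 + 4 * sqrt (3::real)" by (simp add: power2_eq_square algebra_simps)
  have B: "(2 - sqrt 3)^2 = 7 - 4 * sqrt (3::real)" by (simp add: power2_eq_square algebra_simps)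
  show ?thesis unfolding F_def A B by (simp add: algebra_simps)
qed

lemma F3: "F 3 = 12"
proof -
  have A: "(2 + sqrt 3)^3 = 26 + 15 * sqrt (3::real)"
  proof -
    have "(2 + sqrt 3)^3 = (2 + sqrt 3) * (2 + sqrt 3)^2" by (simp add: power3_eq_cube power2_eq_square)
    also have "(2 + sqrt 3)^2 = 7 + 4 * sqrt (3::real)" by (simp add: power2_eq_square algebra_simps)
    finally show ?thesis by (simp add: algebra_simps)
  qed
  have B: "(2 - sqrt 3)^3 = 26 - 15 * sqrt (3::real)"
  proof -
    have "(2 - sqrt 3)^3 = (2 - sqrt 3) * (2 - sqrt 3)^2" by (simp add: power3_eq_cube power2_eq_square)
    also have "(2 - sqrt 3)^2 = 7 - 4 * sqrt (3::real)" by (simp add: power2_eq_square algebra_simps)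
    finally show ?thesis by (simp add: algebra_simps)
  qed
  show ?thesis unfolding F_def A B by (simp add: algebra_simps)
qed

lemma P1: assumes "n \<ge> 3" shows "G_seq n = 2 * G_seq (n - 1) + G_seq (n - 2) + 4 * g_seq (n - 1)"
proof -
  have n2: "n \<ge> 2" using assms by simp
  show ?thesis using recG[OF n2] Xn[OF assms] recg[OF n2] by simp
qed

lemma g2: "g_seq 2 = 3" using recg[of 2] base_G1 base_g1 by simp
lemma g3: "g_seq 3 = 12" using recg[of 3] G2 g2 by simp

lemma P3: assumes "n \<ge> 4"
  shows "int (G_seq n) = 3 * int (G_seq (n - 1)) + 3 * int (G_seq (n - 2)) - int (G_seq (n - 3))"
proof -
  define m where "m = n - 4"
  have m: "n = m + 4" using assms m_def by simp
  have h: "m + 4 - 1 = m + 3" "m + 4 - 2 = m + 2" "m + 3 - 1 = m + 2" "m + 3 - 2 = m + 1"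
    "m + 4 - 3 = m + 1" "m + 2 - 1 = m + 1" by simp_all
  have e1: "G_seq (m+4) = 2 * G_seq (m+3) + G_seq (m+2) + 4 * g_seq (m+3)" using P1[of "m+4", unfolded h] by simp
  have e2: "G_seq (m+3) = 2 * G_seq (m+2) + G_seq (m+1) + 4 * g_seq (m+2)" using P1[of "m+3", unfolded h] by simp
  have e3: "g_seq (m+3) = G_seq (m+2) + g_seq (m+2)" using recg[of "m+3", unfolded h] by simp
  show ?thesis unfolding m h using e1 e2 e3 by simp
qed

lemma P4: assumes "n \<ge> 4"
  shows "int (g_seq n) = 3 * int (g_seq (n - 1)) + 3 * int (g_seq (n - 2)) - int (g_seq (n - 3))"
proof -
  define m where "m = n - 4"
  have m: "n = m + 4" using assms m_def by simp
  have h: "m + 4 - 1 = m + 3" "m + 4 - 2 = m + 2" "m + 3 - 1 = m + 2" "m + 3 - 2 = m + 1"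
    "m + 4 - 3 = m + 1" "m + 2 - 1 = m + 1" by simp_all
  have e1: "G_seq (m+3) = 2 * G_seq (m+2) + G_seq (m+1) + 4 * g_seq (m+2)" using P1[of "m+3", unfolded h] by simp
  have e2: "g_seq (m+4) = G_seq (m+3) + g_seq (m+3)" using recg[of "m+4", unfolded h] by simp
  have e3: "g_seq (m+3) = G_seq (m+2) + g_seq (m+2)" using recg[of "m+3", unfolded h] by simp
  have e4: "g_seq (m+2) = G_seq (m+1) + g_seq (m+1)" using recg[of "m+2", unfolded h] by simp
  show ?thesis unfolding m h using e1 e2 e3 e4 by simp
qed

lemma P5: "n \<ge> 1 \<Longrightarrow> real (g_seq n) = F n"
proof (induction n rule: less_induct)
  case (less n)
  show ?case
  proof (cases "n \<le> 3")
    case True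
    then have "n = 1 \<or> n = 2 \<or> n = 3" using less.prems by auto
    then show ?thesis using base_g1 g2 g3 F1 F2 F3 by auto
  next
    case False
    define m where "m = n - 4"
    have m: "n = m + 4" using False m_def by simp
    have h: "m + 4 - 1 = m + 3" "m + 4 - 2 = m + 2" "m + 4 - 3 = m + 1" by simp_all
    have r: "int (g_seq (m+4)) = 3 * int (g_seq (m+3)) + 3 * int (g_seq (m+2)) - int (g_seq (m+1))"
      using P4[of "m+4", unfolded h] by simp
    have rr: "real (g_seq (m+4)) = 3 * real (g_seq (m+3)) + 3 * real (g_seq (m+2)) - real (g_seq (m+1))"
    proof -
      have "real_of_int (int (g_seq (m+4))) = real_of_int (3 * int (g_seq (m+3)) + 3 * int (g_seq (m+2)) - int (g_seq (m+1)))"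
        using r by simp
      then show ?thesis by simp
    qed
    have i1: "real (g_seq (m+3)) = F (m+3)" using less.IH[of "m+3"] m by simp
    have i2: "real (g_seq (m+2)) = F (m+2)" using less.IH[of "m+2"] m by simp
    have i3: "real (g_seq (m+1)) = F (m+1)" using less.IH[of "m+1"] m by simp
    have hh: "m+1+3 = m+4" "m+1+2 = m+3" "m+1+1 = m+2" by simp_all
    have "F (m+4) = 3 * F (m+3) + 3 * F (m+2) - F (m+1)" using F_rec[of "m+1", unfolded hh] .
    then show ?thesis unfolding m using rr i1 i2 i3 by linarith
  qed
qed

theorem mainTheorem2:
  shows "(\<forall>n\<ge>3. G_seq n = 2 * G_seq (n - 1) + G_seq (n - 2) + 4 * g_seq (n - 1))
       \<and> (\<forall>n\<ge>2. g_seq n = G_seq (n - 1) + g_seq (n - 1))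
       \<and> (\<forall>n\<ge>4. int (G_seq n) = 3 * int (G_seq (n - 1)) + 3 * int (G_seq (n - 2)) - int (G_seq (n - 3)))
       \<and> (\<forall>n\<ge>4. int (g_seq n) = 3 * int (g_seq (n - 1)) + 3 * int (g_seq (n - 2)) - int (g_seq (n - 3)))
       \<and> (\<forall>n\<ge>1. real (g_seq n) =
            ((1 + sqrt 3) * (2 + sqrt 3) ^ n + (1 - sqrt 3) * (2 - sqrt 3) ^ n) / 12
            - (-1) ^ n / 6)"
  using P1 recg P3 P4 P5 unfolding F_def by blast


end
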